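(* Let $(\bar x,\bar r)\in\mathbb{R}^n\times\mathbb{R}^2_+$ with $\bar r=\mathbb{Q}(\bar x)$ be a local optimal solution of problem (P2), and suppose $(\bar x,\bar\xi)\in\mathcal{M}(\bar r)$. Then $(\bar x,\bar\lambda)$ with $\bar\lambda:=\bar\xi$ is a local optimal solution of problem (P1).
   Context: Fix $\Psi\in\mathbb{R}^{d\times n}$, linear difference operators $D_1,\dots,D_n$ (matrices with $n$ columns), and $\|x\|_{\mathrm{TV}}:=\sum_{i=1}^n\|D_ix\|_1$. Training data $\Phi_{\mathrm{tr}}\in\mathbb{R}^{m_1\times n}$, $b_{\mathrm{tr}}\in\mathbb{R}^{m_1}$ and validation data $\Phi_{\mathrm{val}}\in\mathbb{R}^{m_2\times n}$, $b_{\mathrm{val}}\in\mathbb{R}^{m_2}$ are given. Let $F(x):=\frac12\|\Phi_{\mathrm{val}}x-b_{\mathrm{val}}\|_2^2$. For $\lambda\in\mathbb{R}^2_+$, $\mathbb{S}_p(\lambda)$ is the set of minimizers over $x\in\mathbb{R}^n$ of $\frac12\|\Phi_{\mathrm{tr}}x-b_{\mathrm{tr}}\|_2^2+\lambda_1\|\Psi x\|_1+\lambda_2\|x\|_{\mathrm{TV}}$; for $r\in\mathbb{R}^2_+$, $\mathbb{S}_c(r)$ is the set of minimizers over $x\in\mathbb{R}^n$ of $\frac12\|\Phi_{\mathrm{tr}}x-b_{\mathrm{tr}}\|_2^2$ subject to $\|\Psi x\|_1\le r_1$, $\|x\|_{\mathrm{TV}}\le r_2$. Problem (P1): minimize $F(x)$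 over $(x,\lambda)\in\mathbb{R}^n\times\mathbb{R}^2_+$ subject to $x\in\mathbb{S}_p(\lambda)$. Problem (P2): minimize $F(x)$ over $(x,r)\in\mathbb{R}^n\times\mathbb{R}^2_+$ subject to $x\in\mathbb{S}_c(r)$. A feasible point $(\bar x,\bar y)$ of either problem is a local optimal solution if there is $\varepsilon>0$ such that $F(\bar x)\le F(x)$ for every feasible $(x,y)$ with $\|(x,y)-(\bar x,\bar y)\|<\varepsilon$. $\mathbb{Q}(x):=(\|\Psi x\|_1,\|x\|_{\mathrm{TV}})\in\mathbb{R}^2_+$. For $r\in\mathbb{R}^2_+$, $\mathcal{M}(r):=\{(x,\xi)\in\mathbb{R}^n\times\mathbb{R}^2_+ : 0\in\Phi_{\mathrm{tr}}^\top(\Phi_{\mathrm{tr}}x-b_{\mathrm{tr}})+\xi_1\Psi^\top\partial\|\cdot\|_1(\Psi x)+\xi_2\sum_{i=1}^n D_i^\top\partial\|\cdot\|_1(D_ix),\ \xi_1(\|\Psi x\|_1-r_1)=0,\ \xi_2(\|x\|_{\mathrm{TV}}-r_2)=0\}$, where $\partial$ is the convex subdifferential. *)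

theory Defs
  imports "HOL-Analysis.Analysis"
begin

definition l1norm :: "real ^ 'k \<Rightarrow> real" where
  "l1norm y = (\<Sum>j\<in>UNIV. \<bar>y $ j\<bar>)"

definition subdiff :: "(real ^ 'k \<Rightarrow> real) \<Rightarrow> real ^ 'k \<Rightarrow> (real ^ 'k) set" where
  "subdiff f y = {g. \<forall>z. f z \<ge> f y + inner g (z - y)}"

definition TV :: "('n \<Rightarrow> real ^ 'n ^ 'k) \<Rightarrow> real ^ 'n \<Rightarrow> real" where
  "TV D x = (\<Sum>i\<in>UNIV. l1norm (D i *v x))"

definition trainloss :: "real ^ 'n ^ 'm \<Rightarrow> real ^ 'm \<Rightarrow> real ^ 'n \<Rightarrow> real" where
  "trainloss Phi b x = (1/2) * (norm (Phi *v x - b))\<^sup>2"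

definition nonneg2 :: "real \<times> real \<Rightarrow> bool" where
  "nonneg2 p \<longleftrightarrow> fst p \<ge> 0 \<and> snd p \<ge> 0"

definition Sp :: "real ^ 'n ^ 'd \<Rightarrow> ('n \<Rightarrow> real ^ 'n ^ 'k) \<Rightarrow> real ^ 'n ^ 'm \<Rightarrow> real ^ 'm
    \<Rightarrow> real \<times> real \<Rightarrow> (real ^ 'n) set" where
  "Sp Psi D Phi b lam = {x. \<forall>z.
      trainloss Phi b x + fst lam * l1norm (Psi *v x) + snd lam * TV D x
      \<le> trainloss Phi b z + fst lam * l1norm (Psi *v z) + snd lam * TV D z}"

definition Sc :: "real ^ 'n ^ 'd \<Rightarrow> ('n \<Rightarrow> real ^ 'n ^ 'k) \<Rightarrow> real ^ 'n ^ 'm \<Rightarrow> real ^ 'm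
    \<Rightarrow> real \<times> real \<Rightarrow> (real ^ 'n) set" where
  "Sc Psi D Phi b r = {x. l1norm (Psi *v x) \<le> fst r \<and> TV D x \<le> snd r \<and>
      (\<forall>z. l1norm (Psi *v z) \<le> fst r \<and> TV D z \<le> snd r \<longrightarrow> trainloss Phi b x \<le> trainloss Phi b z)}"

definition local_opt :: "('a::metric_space \<Rightarrow> real) \<Rightarrow> ('a \<Rightarrow> 'b::metric_space \<Rightarrow> bool)
    \<Rightarrow> 'a \<Rightarrow> 'b \<Rightarrow> bool" where
  "local_opt F feas xb yb \<longleftrightarrow> feas xb yb \<and>
     (\<exists>\<epsilon>>0. \<forall>x y. feas x y \<and> dist (x, y) (xb, yb) < \<epsilon> \<longrightarrow> F xb \<le> F x)"

definition feasP1 where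
  "feasP1 Psi D Phi b x lam \<longleftrightarrow> nonneg2 lam \<and> x \<in> Sp Psi D Phi b lam"

definition feasP2 where
  "feasP2 Psi D Phi b x r \<longleftrightarrow> nonneg2 r \<and> x \<in> Sc Psi D Phi b r"

definition Qmap :: "real ^ 'n ^ 'd \<Rightarrow> ('n \<Rightarrow> real ^ 'n ^ 'k) \<Rightarrow> real ^ 'n \<Rightarrow> real \<times> real" where
  "Qmap Psi D x = (l1norm (Psi *v x), TV D x)"

definition Mset :: "real ^ 'n ^ 'd \<Rightarrow> ('n \<Rightarrow> real ^ 'n ^ 'k) \<Rightarrow> real ^ 'n ^ 'm \<Rightarrow> real ^ 'm
    \<Rightarrow> real \<times> real \<Rightarrow> ((real ^ 'n) \<times> (real \<times> real)) set" where
  "Mset Psi D Phi b r = {(x, xi). nonneg2 xi \<and>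
     (\<exists>s1 \<in> subdiff l1norm (Psi *v x). \<exists>s2. (\<forall>i. s2 i \<in> subdiff l1norm (D i *v x)) \<and>
        0 = transpose Phi *v (Phi *v x - b) + fst xi *\<^sub>R (transpose Psi *v s1)
            + snd xi *\<^sub>R (\<Sum>i\<in>UNIV. transpose (D i) *v s2 i)) \<and>
     fst xi * (l1norm (Psi *v x) - fst r) = 0 \<and>
     snd xi * (TV D x - snd r) = 0}"

end

theory Submission
  imports Defs
begin

lemma inner_transpose: "inner (transpose (A::real^'n^'m) *v y) x = inner y (A *v x)"
  by (simp add: dot_lmul_matrix)

lemma trainloss_conv:
  "trainloss Phi b z \<ge> trainloss Phi b x + inner (transpose Phi *v (Phi *v x - b)) (z - x)"
proof -
  have e: "Phi *v z - b = (Phi *v x - b) + Phi *v (z - x)"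
    by (simp add: matrix_vector_mult_diff_distrib)
  have "(norm (Phi *v z - b))\<^sup>2 = (norm (Phi *v x - b))\<^sup>2 + 2 * inner (Phi *v x - b) (Phi *v (z - x)) + (norm (Phi *v (z - x)))\<^sup>2"
    unfolding e by (simp add: power2_norm_eq_inner inner_add_left inner_add_right inner_commute)
  moreover have "(norm (Phi *v (z - x)))\<^sup>2 \<ge> 0" by simp
  ultimately show ?thesis unfolding trainloss_def inner_transpose by simp
qed

lemma subdiff_ineq:
  assumes "s \<in> subdiff l1norm (A *v x)"
  shows "l1norm (A *v z) \<ge> l1norm (A *v x) + inner (transpose A *v s) (z - x)"
proof -
  have "l1norm (A *v z) \<ge> l1norm (A *v x) + inner s (A *v z - A *v x)"
    using assms unfolding subdiff_def by blast
  then show ?thesis by (simp only: inner_transpose matrix_vector_mult_diff_distrib)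
qed

lemma cont_Q: "continuous_on UNIV (\<lambda>x. (x, Qmap Psi D x))"
  unfolding Qmap_def TV_def l1norm_def by (intro continuous_intros)

theorem mainTheorem4:
  fixes Psi :: "real ^ 'n ^ 'd" and D :: "'n \<Rightarrow> real ^ 'n ^ 'k"
    and Phi_tr :: "real ^ 'n ^ 'm1" and b_tr :: "real ^ 'm1"
    and Phi_val :: "real ^ 'n ^ 'm2" and b_val :: "real ^ 'm2"
    and xb :: "real ^ 'n" and rb xib :: "real \<times> real"
  defines "F \<equiv> (\<lambda>x. (1/2) * (norm (Phi_val *v x - b_val))\<^sup>2)"
  assumes "rb = Qmap Psi D xb"
    and "local_opt F (feasP2 Psi D Phi_tr b_tr) xb rb"
    and "(xb, xib) \<in> Mset Psi D Phi_tr b_tr rb"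
  shows "local_opt F (feasP1 Psi D Phi_tr b_tr) xb xib"
proof -
  from assms(4) obtain s1 s2 where nn: "nonneg2 xib"
    and s1: "s1 \<in> subdiff l1norm (Psi *v xb)"
    and s2: "\<And>i. s2 i \<in> subdiff l1norm (D i *v xb)"
    and kkt: "0 = transpose Phi_tr *v (Phi_tr *v xb - b_tr) + fst xib *\<^sub>R (transpose Psi *v s1)
            + snd xib *\<^sub>R (\<Sum>i\<in>UNIV. transpose (D i) *v s2 i)"
    unfolding Mset_def by blast
  have xi1: "fst xib \<ge> 0" and xi2: "snd xib \<ge> 0" using nn unfolding nonneg2_def by auto
  have inSp: "xb \<in> Sp Psi D Phi_tr b_tr xib"
    unfolding Sp_def
  proof (intro CollectI allI)
    fix z
    let ?g = "transpose Phi_tr *v (Phi_tr *v xb - b_tr)"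
    let ?h1 = "transpose Psi *v s1"
    let ?h2 = "\<Sum>i\<in>UNIV. transpose (D i) *v s2 i"
    have a: "trainloss Phi_tr b_tr z \<ge> trainloss Phi_tr b_tr xb + inner ?g (z - xb)"
      by (rule trainloss_conv)
    have b: "l1norm (Psi *v z) \<ge> l1norm (Psi *v xb) + inner ?h1 (z - xb)"
      by (rule subdiff_ineq[OF s1])
    have c: "TV D z \<ge> TV D xb + inner ?h2 (z - xb)"
    proof -
      have "TV D z = (\<Sum>i\<in>UNIV. l1norm (D i *v z))" by (simp add: TV_def)
      also have "\<dots> \<ge> (\<Sum>i\<in>UNIV. l1norm (D i *v xb) + inner (transpose (D i) *v s2 i) (z - xb))"
        by (intro sum_mono subdiff_ineq[OF s2])
      finally show ?thesis by (simp add: TV_def sum.distrib inner_sum_left)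
    qed
    have b': "fst xib * l1norm (Psi *v z) \<ge> fst xib * (l1norm (Psi *v xb) + inner ?h1 (z - xb))"
      using b xi1 by (rule mult_left_mono)
    have c': "snd xib * TV D z \<ge> snd xib * (TV D xb + inner ?h2 (z - xb))"
      using c xi2 by (rule mult_left_mono)
    have "inner (?g + fst xib *\<^sub>R ?h1 + snd xib *\<^sub>R ?h2) (z - xb) = 0"
      using kkt by simp
    hence "inner ?g (z - xb) + fst xib * inner ?h1 (z - xb) + snd xib * inner ?h2 (z - xb) = 0"
      by (simp add: inner_add_left)
    then show "trainloss Phi_tr b_tr xb + fst xib * l1norm (Psi *v xb) + snd xib * TV D xb
      \<le> trainloss Phi_tr b_tr z + fst xib * l1norm (Psi *v z) + snd xib * TV D z"
      using a b' c' by (simp add: algebra_simps)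
  qed
  from assms(3) obtain e where e: "e > 0"
    and loc: "\<And>x y. feasP2 Psi D Phi_tr b_tr x y \<and> dist (x, y) (xb, rb) < e \<Longrightarrow> F xb \<le> F x"
    unfolding local_opt_def by blast
  have "isCont (\<lambda>x. (x, Qmap Psi D x)) xb"
    using cont_Q[of Psi D] continuous_on_eq_continuous_at[OF open_UNIV] by blast
  then obtain d where d: "d > 0"
    and dd: "\<And>x. dist x xb < d \<Longrightarrow> dist (x, Qmap Psi D x) (xb, Qmap Psi D xb) < e"
    using e unfolding continuous_at_eps_delta by blast
  show ?thesis
    unfolding local_opt_def
  proof (intro conjI exI[of _ d] allI impI)
    show "feasP1 Psi D Phi_tr b_tr xb xib" using nn inSp by (simp add: feasP1_def)
    show "d > 0" by (rule d)
    fix x lam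
    assume h: "feasP1 Psi D Phi_tr b_tr x lam \<and> dist (x, lam) (xb, xib) < d"
    have "dist x xb < d"
      using h dist_fst_le[of "(x, lam)" "(xb, xib)"] by simp
    hence dist2: "dist (x, Qmap Psi D x) (xb, rb) < e" using dd assms(2) by simp
    have lnn: "fst lam \<ge> 0" "snd lam \<ge> 0" and xSp: "x \<in> Sp Psi D Phi_tr b_tr lam"
      using h unfolding feasP1_def nonneg2_def by auto
    have "x \<in> Sc Psi D Phi_tr b_tr (Qmap Psi D x)"
      unfolding Sc_def Qmap_def
    proof (intro CollectI conjI allI impI; simp?)
      fix z assume hz: "l1norm (Psi *v z) \<le> l1norm (Psi *v x) \<and> TV D z \<le> TV D x"
      have "trainloss Phi_tr b_tr x + fst lam * l1norm (Psi *v x) + snd lam * TV D x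
         \<le> trainloss Phi_tr b_tr z + fst lam * l1norm (Psi *v z) + snd lam * TV D z"
        using xSp unfolding Sp_def by blast
      moreover have "fst lam * l1norm (Psi *v z) \<le> fst lam * l1norm (Psi *v x)"
        using hz lnn by (simp add: mult_left_mono)
      moreover have "snd lam * TV D z \<le> snd lam * TV D x"
        using hz lnn by (simp add: mult_left_mono)
      ultimately show "trainloss Phi_tr b_tr x \<le> trainloss Phi_tr b_tr z" by linarith
    qed
    moreover have "nonneg2 (Qmap Psi D x)"
      by (simp add: nonneg2_def Qmap_def l1norm_def TV_def sum_nonneg)
    ultimately show "F xb \<le> F x"
      using loc[of x "Qmap Psi D x"] dist2 by (simp add: feasP2_def)
  qed
qed

end
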